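(* Let $G$ be a compactly generated, totally disconnected, locally compact group with modular function $\Delta$, and let $\Gamma$ be a Cayley–Abels graph for $G$. For an arc $(\alpha,\beta)$ of $\Gamma$ put $\Delta_{(\alpha,\beta)} = |\beta G_\alpha| / |\alpha G_\beta|$, where $\beta G_\alpha$ denotes the orbit of $\beta$ under the stabilizer $G_\alpha$. If $g\in G$ and $(\alpha_0,\dots,\alpha_s)$ is an $s$-arc in $\Gamma$ with $\alpha_0 g=\alpha_s$, then $$\Delta(g)=\Delta_{(\alpha_0,\alpha_1)}\Delta_{(\alpha_1,\alpha_2)}\cdots\Delta_{(\alpha_{s-1},\alpha_s)}.$$ In particular, the image of $\Delta$ is the subgroup of the multiplicative group $\mathbb{Q}^{+}$ generated by the labels $\Delta_{(\alpha,\beta)}$ of the arcs of $\Gamma$.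
   Context: Groups act on the right. A Cayley–Abels graph for a totally disconnected, locally compact group $G$ is a connected, locally finite simple graph with an action of $G$ by automorphisms that is vertex-transitive with compact open vertex stabilizers. The modular function $\Delta\colon G\to\mathbb{R}^{+}$ is defined via a right-invariant Haar measure $\mu$ by $\mu(gA)=\Delta(g)\mu(A)$ for measurable $A$; equivalently, for any compact open subgroup $U$, $\Delta(g)=|U:U\cap g^{-1}Ug|/|g^{-1}Ug:U\cap g^{-1}Ug|$. An arc is an ordered pair of adjacent vertices; an $s$-arc is a sequence $(\alpha_0,\dots,\alpha_s)$ of vertices with $\alpha_i,\alpha_{i+1}$ adjacent for all $i$ and $\alpha_{i-1}\ne\alpha_{i+1}$ for $1\le i\le s-1$. *)

theory Defs
  imports "HOL-Analysis.Abstract_Topological_Spaces" "HOL-Algebra.Generated_Groups" "HOL-Algebra.Coset"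
begin

definition topological_group :: "('g, 'b) monoid_scheme \<Rightarrow> 'g topology \<Rightarrow> bool" where
  "topological_group G T \<longleftrightarrow> group G \<and> topspace T = carrier G
     \<and> continuous_map (prod_topology T T) T (\<lambda>(x, y). x \<otimes>\<^bsub>G\<^esub> y)
     \<and> continuous_map T T (\<lambda>x. inv\<^bsub>G\<^esub> x)"

definition totally_disconnected_space :: "'a topology \<Rightarrow> bool" where
  "totally_disconnected_space T \<longleftrightarrow> (\<forall>S. connectedin T S \<longrightarrow> (\<exists>a. S \<subseteq> {a}))"

definition tdlc_group :: "('g, 'b) monoid_scheme \<Rightarrow> 'g topology \<Rightarrow> bool" where
  "tdlc_group G T \<longleftrightarrow> topological_group G T \<and> totally_disconnected_space T
     \<and> locally_compact_space T"

definition compactly_generated :: "('g, 'b) monoid_scheme \<Rightarrow> 'g topology \<Rightarrow> bool" where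
  "compactly_generated G T \<longleftrightarrow>
     (\<exists>K. K \<subseteq> carrier G \<and> compactin T K \<and> generate G K = carrier G)"

definition compact_open_subgroup :: "('g, 'b) monoid_scheme \<Rightarrow> 'g topology \<Rightarrow> 'g set \<Rightarrow> bool" where
  "compact_open_subgroup G T U \<longleftrightarrow> subgroup U G \<and> compactin T U \<and> openin T U"

definition sg_index :: "('g, 'b) monoid_scheme \<Rightarrow> 'g set \<Rightarrow> 'g set \<Rightarrow> nat" where
  "sg_index G U H = card ((\<lambda>u. H #>\<^bsub>G\<^esub> u) ` U)"

definition conj_set :: "('g, 'b) monoid_scheme \<Rightarrow> 'g \<Rightarrow> 'g set \<Rightarrow> 'g set" where
  "conj_set G g U = (\<lambda>u. inv\<^bsub>G\<^esub> g \<otimes>\<^bsub>G\<^esub> u \<otimes>\<^bsub>G\<^esub> g) ` U"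

text \<open>Delta(g) = |U : U \<inter> g^-1 U g| / |g^-1 U g : U \<inter> g^-1 U g| for a (any) compact open
  subgroup U; here U is an arbitrary chosen one.\<close>
definition modular_fn :: "('g, 'b) monoid_scheme \<Rightarrow> 'g topology \<Rightarrow> 'g \<Rightarrow> real" where
  "modular_fn G T g =
     (let U = (SOME U. compact_open_subgroup G T U); W = conj_set G g U
      in real (sg_index G U (U \<inter> W)) / real (sg_index G W (U \<inter> W)))"

definition stabilizer :: "('g, 'b) monoid_scheme \<Rightarrow> ('v \<Rightarrow> 'g \<Rightarrow> 'v) \<Rightarrow> 'v \<Rightarrow> 'g set" where
  "stabilizer G act v = {g \<in> carrier G. act v g = v}"

definition orbit_under :: "('v \<Rightarrow> 'g \<Rightarrow> 'v) \<Rightarrow> 'v \<Rightarrow> 'g set \<Rightarrow> 'v set" where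
  "orbit_under act v H = (\<lambda>h. act v h) ` H"

definition cayley_abels_graph ::
  "('g, 'b) monoid_scheme \<Rightarrow> 'g topology \<Rightarrow> 'v set \<Rightarrow> ('v \<Rightarrow> 'v \<Rightarrow> bool) \<Rightarrow> ('v \<Rightarrow> 'g \<Rightarrow> 'v) \<Rightarrow> bool" where
  "cayley_abels_graph G T V E act \<longleftrightarrow>
     V \<noteq> {}
     \<comment> \<open>simple graph on V\<close>
     \<and> (\<forall>u v. E u v \<longrightarrow> u \<in> V \<and> v \<in> V \<and> u \<noteq> v \<and> E v u)
     \<comment> \<open>connected\<close>
     \<and> (\<forall>u\<in>V. \<forall>v\<in>V. E\<^sup>*\<^sup>* u v)
     \<comment> \<open>locally finite\<close>
     \<and> (\<forall>v\<in>V. finite {w. E v w})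
     \<comment> \<open>right action of G on V by automorphisms\<close>
     \<and> (\<forall>v\<in>V. \<forall>g\<in>carrier G. act v g \<in> V)
     \<and> (\<forall>v\<in>V. act v \<one>\<^bsub>G\<^esub> = v)
     \<and> (\<forall>v\<in>V. \<forall>g\<in>carrier G. \<forall>h\<in>carrier G. act (act v g) h = act v (g \<otimes>\<^bsub>G\<^esub> h))
     \<and> (\<forall>u\<in>V. \<forall>v\<in>V. \<forall>g\<in>carrier G. E u v \<longleftrightarrow> E (act u g) (act v g))
     \<comment> \<open>vertex-transitive\<close>
     \<and> (\<forall>u\<in>V. \<forall>v\<in>V. \<exists>g\<in>carrier G. act u g = v)
     \<comment> \<open>compact open vertex stabilizers\<close>
     \<and> (\<forall>v\<in>V. compactin T (stabilizer G act v) \<and> openin T (stabilizer G act v))"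

definition arc_label :: "('g, 'b) monoid_scheme \<Rightarrow> ('v \<Rightarrow> 'g \<Rightarrow> 'v) \<Rightarrow> 'v \<Rightarrow> 'v \<Rightarrow> real" where
  "arc_label G act a b =
     real (card (orbit_under act b (stabilizer G act a)))
     / real (card (orbit_under act a (stabilizer G act b)))"

definition s_arc :: "'v set \<Rightarrow> ('v \<Rightarrow> 'v \<Rightarrow> bool) \<Rightarrow> nat \<Rightarrow> (nat \<Rightarrow> 'v) \<Rightarrow> bool" where
  "s_arc V E s a \<longleftrightarrow> (\<forall>i\<le>s. a i \<in> V) \<and> (\<forall>i<s. E (a i) (a (Suc i)))
     \<and> (\<forall>i. 0 < i \<and> i < s \<longrightarrow> a (i - 1) \<noteq> a (Suc i))"

inductive_set mult_generated :: "real set \<Rightarrow> real set" for S where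
  one: "1 \<in> mult_generated S"
| mul: "x \<in> mult_generated S \<Longrightarrow> s \<in> S \<Longrightarrow> x * s \<in> mult_generated S"
| dvd: "x \<in> mult_generated S \<Longrightarrow> s \<in> S \<Longrightarrow> x / s \<in> mult_generated S"

end

theory Submission
  imports Defs
begin


lemma card_image_rel:
  assumes "\<forall>x\<in>X. \<forall>y\<in>X. (f x = f y) = (g x = g y)"
  shows "card (f ` X) = card (g ` X) \<and> (finite (f ` X) \<longleftrightarrow> finite (g ` X))"
proof -
  define h where "h c = g (SOME x. x \<in> X \<and> f x = c)" for c
  have hg: "h (f x) = g x" if "x \<in> X" for x
  proof -
    have "(SOME y. y \<in> X \<and> f y = f x) \<in> X \<and> f (SOME y. y \<in> X \<and> f y = f x) = f x"
      by (rule someI[of _ x]) (use that in auto)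
    then show ?thesis using assms that unfolding h_def by metis
  qed
  have img: "h ` (f ` X) = g ` X" using hg by (auto simp: image_image)
  have inj: "inj_on h (f ` X)"
    unfolding inj_on_def using hg assms by auto
  have "bij_betw h (f ` X) (g ` X)" using img inj by (simp add: bij_betw_def)
  then show ?thesis using bij_betw_same_card bij_betw_finite by blast
qed

lemma finite_image_factor:
  assumes "\<forall>x\<in>X. \<forall>y\<in>X. f x = f y \<longrightarrow> g x = g y" "finite (f ` X)"
  shows "finite (g ` X)"
proof -
  define h where "h c = g (SOME x. x \<in> X \<and> f x = c)" for c
  have hg: "h (f x) = g x" if "x \<in> X" for x
  proof -
    have "(SOME y. y \<in> X \<and> f y = f x) \<in> X \<and> f (SOME y. y \<in> X \<and> f y = f x) = f x"
      by (rule someI[of _ x]) (use that in auto)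
    then show ?thesis using assms that unfolding h_def by metis
  qed
  have "g ` X = h ` (f ` X)" using hg by (auto simp: image_image)
  then show ?thesis using assms(2) by simp
qed

lemma (in group) rcos_eq:
  assumes "subgroup H G" "x \<in> carrier G" "y \<in> carrier G"
  shows "(H #> x = H #> y) \<longleftrightarrow> x \<otimes> inv y \<in> H"
proof
  assume "H #> x = H #> y"
  then have "x \<in> H #> y" using rcos_self[OF assms(2,1)] by simp
  then show "x \<otimes> inv y \<in> H" using subgroup.rcos_module_imp[OF assms(1) is_group assms(3)] by blast
next
  assume "x \<otimes> inv y \<in> H"
  then have "x \<in> H #> y" using subgroup.rcos_module_rev[OF assms(1) is_group assms(3,2)] by blast
  then show "H #> x = H #> y" using repr_independence[OF _ assms(3,1)] by simp
qed

lemma (in group) idx_mult: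
  assumes A: "subgroup A G" and H: "subgroup H G" and D: "subgroup D G"
    and DH: "D \<subseteq> H" and HA: "H \<subseteq> A"
    and f1: "finite ((\<lambda>u. H #> u) ` A)" and f2: "finite ((\<lambda>u. D #> u) ` H)"
  shows "sg_index G A D = sg_index G A H * sg_index G H D \<and> finite ((\<lambda>u. D #> u) ` A)"
proof -
  have Ac: "A \<subseteq> carrier G" using A subgroup.subset by blast
  have Hc: "H \<subseteq> carrier G" using H subgroup.subset by blast
  have Dc: "D \<subseteq> carrier G" using D subgroup.subset by blast
  define CH where "CH = (\<lambda>u. H #> u) ` A"
  define CD where "CD = (\<lambda>u. D #> u) ` H"
  define r where "r c = (SOME a. a \<in> A \<and> c = H #> a)" for c
  have r: "r c \<in> A \<and> c = H #> r c" if cCH: "c \<in> CH" for c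
  proof -
    obtain a where "a \<in> A" "c = H #> a" using cCH unfolding CH_def by blast
    then show ?thesis unfolding r_def by (metis (mono_tags, lifting) someI)
  qed
  define F where "F p = snd p #> r (fst p)" for p
  have bij: "bij_betw F (CH \<times> CD) ((\<lambda>u. D #> u) ` A)"
  proof (rule bij_betw_imageI)
    show "inj_on F (CH \<times> CD)"
    proof (rule inj_onI)
      fix p q assume p: "p \<in> CH \<times> CD" and q: "q \<in> CH \<times> CD" and eq: "F p = F q"
      obtain c d where pcd: "p = (c, d)" by (cases p)
      obtain c' d' where qcd: "q = (c', d')" by (cases q)
      have c: "c \<in> CH" and d: "d \<in> CD" and c': "c' \<in> CH" and d': "d' \<in> CD" using p q pcd qcd by auto
      obtain h where h: "h \<in> H" "d = D #> h" using d unfolding CD_def by blast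
      obtain h' where h': "h' \<in> H" "d' = D #> h'" using d' unfolding CD_def by blast
      have rc: "r c \<in> carrier G" "r c' \<in> carrier G" using r c c' Ac by auto
      have hc: "h \<in> carrier G" "h' \<in> carrier G" using h h' Hc by auto
      have "D #> (h \<otimes> r c) = D #> (h' \<otimes> r c')"
        using eq unfolding F_def pcd qcd using h h' coset_mult_assoc Dc rc hc by simp
      then have "(h \<otimes> r c) \<otimes> inv (h' \<otimes> r c') \<in> D" using rcos_eq[OF D] rc hc by simp
      then have "(h \<otimes> r c) \<otimes> inv (h' \<otimes> r c') \<in> H" using DH by blast
      then have "H #> (h \<otimes> r c) = H #> (h' \<otimes> r c')" using rcos_eq[OF H] rc hc by simp
      moreover have "H #> (h \<otimes> r c) = H #> r c"
        using rcos_eq[OF H] rc hc h by (simp add: m_assoc)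
      moreover have "H #> (h' \<otimes> r c') = H #> r c'"
        using rcos_eq[OF H] rc hc h' by (simp add: m_assoc)
      ultimately have cc: "c = c'" using r c c' by metis
      have "(h \<otimes> r c) \<otimes> inv (h' \<otimes> r c) \<in> D"
        using \<open>(h \<otimes> r c) \<otimes> inv (h' \<otimes> r c') \<in> D\<close> cc by simp
      moreover have "r c \<otimes> (inv (r c) \<otimes> inv h') = inv h'"
        using rc hc by (simp add: m_assoc[symmetric])
      ultimately have "h \<otimes> inv h' \<in> D"
        using rc hc by (simp add: inv_mult_group m_assoc)
      then have "d = d'" using h h' rcos_eq[OF D] hc by simp
      then show "p = q" using cc pcd qcd by simp
    qed
    show "F ` (CH \<times> CD) = (\<lambda>u. D #> u) ` A"
    proof
      show "F ` (CH \<times> CD) \<subseteq> (\<lambda>u. D #> u) ` A"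
      proof
        fix x assume "x \<in> F ` (CH \<times> CD)"
        then obtain c d where c: "c \<in> CH" and d: "d \<in> CD" and x: "x = F (c, d)" by auto
        obtain h where h: "h \<in> H" "d = D #> h" using d unfolding CD_def by blast
        have "r c \<in> carrier G" "h \<in> carrier G" using h r[OF c] Hc Ac by auto
        then have "x = D #> (h \<otimes> r c)" using x h coset_mult_assoc[OF Dc] unfolding F_def by simp
        moreover have "h \<otimes> r c \<in> A" using h r c HA subgroup.m_closed[OF A] by blast
        ultimately show "x \<in> (\<lambda>u. D #> u) ` A" by blast
      qed
    next
      show "(\<lambda>u. D #> u) ` A \<subseteq> F ` (CH \<times> CD)"
      proof
        fix x assume "x \<in> (\<lambda>u. D #> u) ` A"
        then obtain a where a: "a \<in> A" "x = D #> a" by blast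
        define c where "c = H #> a"
        have c: "c \<in> CH" unfolding CH_def c_def using a by blast
        have rc: "r c \<in> A" "H #> r c = H #> a" using r[OF c] c_def by auto
        have ac: "a \<in> carrier G" "r c \<in> carrier G" using a rc Ac by auto
        have hH: "a \<otimes> inv (r c) \<in> H" using rcos_eq[OF H, of a "r c"] ac rc by simp
        have "F (c, D #> (a \<otimes> inv (r c))) = D #> ((a \<otimes> inv (r c)) \<otimes> r c)"
          unfolding F_def using coset_mult_assoc Dc ac by simp
        also have "\<dots> = x" using a ac by (simp add: m_assoc)
        finally show "x \<in> F ` (CH \<times> CD)"
          using c hH unfolding CD_def by force
      qed
    qed
  qed
  have "card ((\<lambda>u. D #> u) ` A) = card (CH \<times> CD)" using bij bij_betw_same_card by metis
  also have "\<dots> = card CH * card CD" by (simp add: card_cartesian_product)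
  finally have "sg_index G A D = sg_index G A H * sg_index G H D"
    unfolding sg_index_def CH_def CD_def .
  moreover have "finite ((\<lambda>u. D #> u) ` A)"
    using bij bij_betw_finite f1 f2 unfolding CH_def CD_def by blast
  ultimately show ?thesis by blast
qed



lemma tg_rmul:
  assumes "topological_group G T" "c \<in> carrier G"
  shows "continuous_map T T (\<lambda>x. x \<otimes>\<^bsub>G\<^esub> c)"
proof -
  have m: "continuous_map (prod_topology T T) T (\<lambda>(x, y). x \<otimes>\<^bsub>G\<^esub> y)"
    using assms(1) unfolding topological_group_def by blast
  have ts: "topspace T = carrier G" using assms(1) unfolding topological_group_def by blast
  have p: "continuous_map T (prod_topology T T) (\<lambda>x. (x, c))"
    by (intro continuous_map_pairedI) (auto simp: ts assms(2) continuous_map_id[unfolded id_def])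
  show ?thesis using continuous_map_compose[OF p m] by (simp add: o_def)
qed

lemma tg_lmul:
  assumes "topological_group G T" "c \<in> carrier G"
  shows "continuous_map T T (\<lambda>x. c \<otimes>\<^bsub>G\<^esub> x)"
proof -
  have m: "continuous_map (prod_topology T T) T (\<lambda>(x, y). x \<otimes>\<^bsub>G\<^esub> y)"
    using assms(1) unfolding topological_group_def by blast
  have ts: "topspace T = carrier G" using assms(1) unfolding topological_group_def by blast
  have p: "continuous_map T (prod_topology T T) (\<lambda>x. (c, x))"
    by (intro continuous_map_pairedI) (auto simp: ts assms(2) continuous_map_id[unfolded id_def])
  show ?thesis using continuous_map_compose[OF p m] by (simp add: o_def)
qed

lemma (in group) tg_open_rcos:
  assumes tg: "topological_group G T" and K: "openin T K" "K \<subseteq> carrier G" and u: "u \<in> carrier G"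
  shows "openin T (K #>\<^bsub>G\<^esub> u)"
proof -
  have ts: "topspace T = carrier G" using tg unfolding topological_group_def by blast
  have "K #> u = {x \<in> topspace T. x \<otimes> inv u \<in> K}"
  proof
    show "K #> u \<subseteq> {x \<in> topspace T. x \<otimes> inv u \<in> K}"
    proof
      fix x assume "x \<in> K #> u"
      then obtain k where k: "k \<in> K" "x = k \<otimes> u" unfolding r_coset_def by blast
      have kc: "k \<in> carrier G" using k K(2) by blast
      have "x \<otimes> inv u = k" using k kc u by (simp add: m_assoc)
      then show "x \<in> {x \<in> topspace T. x \<otimes> inv u \<in> K}" using k kc u ts by simp
    qed
    show "{x \<in> topspace T. x \<otimes> inv u \<in> K} \<subseteq> K #> u"
    proof
      fix x assume "x \<in> {x \<in> topspace T. x \<otimes> inv u \<in> K}"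
      then have x: "x \<in> carrier G" "x \<otimes> inv u \<in> K" by (auto simp: ts)
      have "x = (x \<otimes> inv u) \<otimes> u" using x u by (simp add: m_assoc)
      then show "x \<in> K #> u" using x unfolding r_coset_def by blast
    qed
  qed
  then show ?thesis
    using openin_continuous_map_preimage[OF tg_rmul[OF tg inv_closed[OF u]] K(1)] by simp
qed

lemma (in group) tg_fin_cosets:
  assumes tg: "topological_group G T" and U: "subgroup U G" "compactin T U"
    and W: "subgroup W G" "openin T W"
  shows "finite ((\<lambda>u. W #>\<^bsub>G\<^esub> u) ` U)"
proof -
  have Uc: "U \<subseteq> carrier G" using U subgroup.subset by blast
  have Wc: "W \<subseteq> carrier G" using W subgroup.subset by blast
  define \<U> where "\<U> = (\<lambda>u. W #> u) ` U"
  have op: "\<forall>B\<in>\<U>. openin T B" unfolding \<U>_def using tg_open_rcos[OF tg W(2) Wc] Uc by blast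
  have cov: "U \<subseteq> \<Union>\<U>" unfolding \<U>_def using rcos_self[OF _ W(1)] Uc by blast
  have "\<exists>\<F>. finite \<F> \<and> \<F> \<subseteq> \<U> \<and> U \<subseteq> \<Union>\<F>"
    using U(2) op cov unfolding compactin_def by blast
  then obtain \<F> where F: "finite \<F>" "\<F> \<subseteq> \<U>" "U \<subseteq> \<Union>\<F>" by blast
  have "\<U> \<subseteq> \<F>"
  proof
    fix c assume "c \<in> \<U>"
    then obtain u where u: "u \<in> U" "c = W #> u" unfolding \<U>_def by blast
    then obtain c' where c': "c' \<in> \<F>" "u \<in> c'" using F(3) by blast
    then obtain u' where u': "u' \<in> U" "c' = W #> u'" using F(2) unfolding \<U>_def by blast
    have "W #> u' = W #> u" using repr_independence[of u W u'] c' u' Uc W(1) by auto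
    then show "c \<in> \<F>" using u u' c' by simp
  qed
  then show ?thesis using F(1) finite_subset unfolding \<U>_def by blast
qed

lemma (in group) tg_cofin:
  assumes tg: "topological_group G T" and U: "subgroup U G" "compactin T U"
    and W: "subgroup W G" "openin T W" and X: "subgroup X G" "X \<subseteq> U"
  shows "finite ((\<lambda>u. (X \<inter> W) #>\<^bsub>G\<^esub> u) ` X)"
proof -
  have XW: "subgroup (X \<inter> W) G" using subgroups_Inter_pair X(1) W(1) by blast
  have f0: "finite ((\<lambda>u. W #> u) ` U)" using tg_fin_cosets[OF tg U W] .
  have "(\<lambda>u. W #> u) ` X \<subseteq> (\<lambda>u. W #> u) ` U" using X(2) by (rule image_mono)
  then have f: "finite ((\<lambda>u. W #> u) ` X)" using f0 by (rule finite_subset)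
  have Xc: "X \<subseteq> carrier G" using X subgroup.subset by blast
  have rel: "\<forall>x\<in>X. \<forall>y\<in>X. W #> x = W #> y \<longrightarrow> (X \<inter> W) #> x = (X \<inter> W) #> y"
  proof (intro ballI impI)
    fix x y assume xy: "x \<in> X" "y \<in> X" "W #> x = W #> y"
    have xc: "x \<in> carrier G" "y \<in> carrier G" using xy Xc by auto
    have "x \<otimes> inv y \<in> W" using rcos_eq[OF W(1) xc] xy(3) by simp
    moreover have "inv y \<in> X" using subgroup.m_inv_closed[OF X(1) xy(2)] .
    have "x \<otimes> inv y \<in> X" using subgroup.m_closed[OF X(1) xy(1) \<open>inv y \<in> X\<close>] .
    ultimately have "x \<otimes> inv y \<in> X \<inter> W" by blast
    then show "(X \<inter> W) #> x = (X \<inter> W) #> y" using rcos_eq[OF XW xc] by simp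
  qed
  show ?thesis by (rule finite_image_factor[OF rel f])
qed

definition ratio :: "('g, 'b) monoid_scheme \<Rightarrow> 'g set \<Rightarrow> 'g set \<Rightarrow> real" where
  "ratio G A B = real (sg_index G A (A \<inter> B)) / real (sg_index G B (A \<inter> B))"

lemma idx_pos:
  assumes "subgroup X G" "finite ((\<lambda>u. H #>\<^bsub>G\<^esub> u) ` X)"
  shows "sg_index G X H > 0"
proof -
  have "X \<noteq> {}" using assms(1) subgroup.one_closed by blast
  then show ?thesis using assms(2) unfolding sg_index_def by (simp add: card_gt_0_iff)
qed

lemma (in group) ratio_D:
  assumes tg: "topological_group G T"
    and A: "compact_open_subgroup G T A" and B: "compact_open_subgroup G T B"
    and E: "subgroup E G" "openin T E" and D: "D = A \<inter> B \<inter> E"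
  shows "ratio G A B = real (sg_index G A D) / real (sg_index G B D)
    \<and> sg_index G A D > 0 \<and> sg_index G B D > 0"
proof -
  have As: "subgroup A G" "compactin T A" "openin T A" using A unfolding compact_open_subgroup_def by auto
  have Bs: "subgroup B G" "compactin T B" "openin T B" using B unfolding compact_open_subgroup_def by auto
  have H: "subgroup (A \<inter> B) G" using subgroups_Inter_pair As Bs by blast
  have Ds: "subgroup D G" unfolding D using subgroups_Inter_pair H E by blast
  have f1: "finite ((\<lambda>u. (A \<inter> B) #> u) ` A)"
    using tg_cofin[OF tg As(1,2) Bs(1,3) As(1)] by simp
  have f1': "finite ((\<lambda>u. (A \<inter> B) #> u) ` B)"
    using tg_cofin[OF tg Bs(1,2) As(1,3) Bs(1)] by (simp add: Int_commute)
  have f2: "finite ((\<lambda>u. D #> u) ` (A \<inter> B))"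
    using tg_cofin[OF tg As(1,2) E H] D by auto
  have m1: "sg_index G A D = sg_index G A (A \<inter> B) * sg_index G (A \<inter> B) D"
    using idx_mult[OF As(1) H Ds _ _ f1 f2] D by auto
  have m2: "sg_index G B D = sg_index G B (A \<inter> B) * sg_index G (A \<inter> B) D"
    using idx_mult[OF Bs(1) H Ds _ _ f1' f2] D by auto
  have p0: "sg_index G (A \<inter> B) D > 0" using idx_pos[OF H f2] .
  have p1: "sg_index G A (A \<inter> B) > 0" using idx_pos[OF As(1) f1] .
  have p2: "sg_index G B (A \<inter> B) > 0" using idx_pos[OF Bs(1) f1'] .
  show ?thesis unfolding ratio_def m1 m2 using p0 p1 p2 by (simp add: of_nat_mult)
qed

lemma ratio_trans:
  assumes tg: "topological_group G T"
  and gr: "group G"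
    and A: "compact_open_subgroup G T A" and B: "compact_open_subgroup G T B"
    and C: "compact_open_subgroup G T C"
  shows "ratio G A B * ratio G B C = ratio G A C"
proof -
  have sA: "subgroup A G" "openin T A" using A unfolding compact_open_subgroup_def by auto
  have sB: "subgroup B G" "openin T B" using B unfolding compact_open_subgroup_def by auto
  have sC: "subgroup C G" "openin T C" using C unfolding compact_open_subgroup_def by auto
  define D where "D = A \<inter> B \<inter> C"
  have r1: "ratio G A B = real (sg_index G A D) / real (sg_index G B D)"
    using group.ratio_D[OF gr tg A B sC] D_def by blast
  have d2: "D = B \<inter> C \<inter> A" "D = A \<inter> C \<inter> B" unfolding D_def by blast+
  have r2: "ratio G B C = real (sg_index G B D) / real (sg_index G C D)" "sg_index G B D > 0"
    using group.ratio_D[OF gr tg B C sA d2(1)] by auto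
  have r3: "ratio G A C = real (sg_index G A D) / real (sg_index G C D)"
    using group.ratio_D[OF gr tg A C sB d2(2)] by auto
  show ?thesis using r1 r2 r3 by simp
qed

lemma ratio_self:
  assumes tg: "topological_group G T" and gr: "group G" and A: "compact_open_subgroup G T A"
  shows "ratio G A A = 1"
proof -
  have "subgroup A G" "openin T A" using A unfolding compact_open_subgroup_def by auto
  then have "ratio G A A = real (sg_index G A (A \<inter> A \<inter> A)) / real (sg_index G A (A \<inter> A \<inter> A))
     \<and> sg_index G A (A \<inter> A \<inter> A) > 0"
    using group.ratio_D[OF gr tg A A, of A "A \<inter> A \<inter> A"] by blast
  then show ?thesis by simp
qed



lemma (in group) cancel_aux:
  assumes "g \<in> carrier G" "z \<in> carrier G"
  shows "g \<otimes> (inv g \<otimes> z) = z" "inv g \<otimes> (g \<otimes> z) = z"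
  using assms by (simp_all add: m_assoc[symmetric])

lemma (in group) cf_mult:
  assumes "g \<in> carrier G" "x \<in> carrier G" "y \<in> carrier G"
  shows "(inv g \<otimes> x \<otimes> g) \<otimes> (inv g \<otimes> y \<otimes> g) = inv g \<otimes> (x \<otimes> y) \<otimes> g"
  using assms by (simp add: m_assoc cancel_aux)

lemma (in group) cf_inv:
  assumes "g \<in> carrier G" "x \<in> carrier G"
  shows "inv (inv g \<otimes> x \<otimes> g) = inv g \<otimes> inv x \<otimes> g"
  using assms by (simp add: inv_mult_group m_assoc)

lemma (in group) cf_back:
  assumes "g \<in> carrier G" "x \<in> carrier G"
  shows "g \<otimes> (inv g \<otimes> x \<otimes> g) \<otimes> inv g = x" "inv g \<otimes> (g \<otimes> x \<otimes> inv g) \<otimes> g = x"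
  using assms by (simp_all add: m_assoc cancel_aux)

lemma (in group) cf_inj:
  assumes "g \<in> carrier G"
  shows "inj_on (\<lambda>x. inv g \<otimes> x \<otimes> g) (carrier G)"
proof (rule inj_onI)
  fix x y assume xy: "x \<in> carrier G" "y \<in> carrier G" "inv g \<otimes> x \<otimes> g = inv g \<otimes> y \<otimes> g"
  then have "g \<otimes> (inv g \<otimes> x \<otimes> g) \<otimes> inv g = g \<otimes> (inv g \<otimes> y \<otimes> g) \<otimes> inv g" by simp
  then show "x = y" using cf_back(1)[OF assms xy(1)] cf_back(1)[OF assms xy(2)] by simp
qed

lemma (in group) conj_subgroup:
  assumes U: "subgroup U G" and g: "g \<in> carrier G"
  shows "subgroup (conj_set G g U) G"
proof -
  have Uc: "U \<subseteq> carrier G" using U subgroup.subset by blast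
  show ?thesis unfolding conj_set_def
  proof (rule subgroupI)
    show "(\<lambda>u. inv g \<otimes> u \<otimes> g) ` U \<subseteq> carrier G" using Uc g by auto
    show "(\<lambda>u. inv g \<otimes> u \<otimes> g) ` U \<noteq> {}" using subgroup.one_closed[OF U] by blast
    fix a b assume a: "a \<in> (\<lambda>u. inv g \<otimes> u \<otimes> g) ` U"
    then obtain u where u: "u \<in> U" "a = inv g \<otimes> u \<otimes> g" by blast
    have uc: "u \<in> carrier G" using u Uc by auto
    show "inv a \<in> (\<lambda>u. inv g \<otimes> u \<otimes> g) ` U"
      using cf_inv[OF g uc] u subgroup.m_inv_closed[OF U u(1)] by auto
    assume "b \<in> (\<lambda>u. inv g \<otimes> u \<otimes> g) ` U"
    then obtain w where w: "w \<in> U" "b = inv g \<otimes> w \<otimes> g" by blast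
    have wc: "w \<in> carrier G" using w Uc by auto
    show "a \<otimes> b \<in> (\<lambda>u. inv g \<otimes> u \<otimes> g) ` U"
      using cf_mult[OF g uc wc] u w subgroup.m_closed[OF U u(1) w(1)] by auto
  qed
qed

lemma (in group) conj_Int:
  assumes "A \<subseteq> carrier G" "B \<subseteq> carrier G" "g \<in> carrier G"
  shows "conj_set G g (A \<inter> B) = conj_set G g A \<inter> conj_set G g B"
  unfolding conj_set_def using inj_on_image_Int[OF cf_inj[OF assms(3)] assms(1,2)] .

lemma (in group) idx_conj:
  assumes A: "subgroup A G" and H: "subgroup H G" and g: "g \<in> carrier G"
  shows "sg_index G (conj_set G g A) (conj_set G g H) = sg_index G A H"
proof -
  have Ac: "A \<subseteq> carrier G" using A subgroup.subset by blast
  have Hc: "H \<subseteq> carrier G" using H subgroup.subset by blast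
  have cH: "subgroup (conj_set G g H) G" using conj_subgroup[OF H g] .
  have rel: "\<forall>x\<in>A. \<forall>y\<in>A. (conj_set G g H #> (inv g \<otimes> x \<otimes> g) = conj_set G g H #> (inv g \<otimes> y \<otimes> g))
     = (H #> x = H #> y)"
  proof (intro ballI)
    fix x y assume xy: "x \<in> A" "y \<in> A"
    have xc: "x \<in> carrier G" "y \<in> carrier G" using xy Ac by auto
    have e: "(inv g \<otimes> x \<otimes> g) \<otimes> inv (inv g \<otimes> y \<otimes> g) = inv g \<otimes> (x \<otimes> inv y) \<otimes> g"
      using cf_inv[OF g xc(2)] cf_mult[OF g xc(1) inv_closed[OF xc(2)]] by simp
    have "(conj_set G g H #> (inv g \<otimes> x \<otimes> g) = conj_set G g H #> (inv g \<otimes> y \<otimes> g))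
        = (inv g \<otimes> (x \<otimes> inv y) \<otimes> g \<in> conj_set G g H)"
      using rcos_eq[OF cH] xc g e by simp
    also have "\<dots> = (x \<otimes> inv y \<in> H)"
    proof
      assume "inv g \<otimes> (x \<otimes> inv y) \<otimes> g \<in> conj_set G g H"
      then obtain h where h: "h \<in> H" "inv g \<otimes> (x \<otimes> inv y) \<otimes> g = inv g \<otimes> h \<otimes> g"
        unfolding conj_set_def by blast
      have "x \<otimes> inv y = h" using cf_inj[OF g] h Hc xc unfolding inj_on_def by blast
      then show "x \<otimes> inv y \<in> H" using h by simp
    next
      assume "x \<otimes> inv y \<in> H"
      then show "inv g \<otimes> (x \<otimes> inv y) \<otimes> g \<in> conj_set G g H" unfolding conj_set_def by blast
    qed
    also have "\<dots> = (H #> x = H #> y)" using rcos_eq[OF H xc] by simp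
    finally show "(conj_set G g H #> (inv g \<otimes> x \<otimes> g) = conj_set G g H #> (inv g \<otimes> y \<otimes> g))
     = (H #> x = H #> y)" .
  qed
  have "sg_index G (conj_set G g A) (conj_set G g H)
      = card ((\<lambda>x. conj_set G g H #> (inv g \<otimes> x \<otimes> g)) ` A)"
    unfolding sg_index_def conj_set_def[of G g A] by (simp add: image_image)
  also have "\<dots> = card ((\<lambda>x. H #> x) ` A)" using card_image_rel[OF rel] by blast
  finally show ?thesis unfolding sg_index_def .
qed

lemma (in group) ratio_conj:
  assumes A: "subgroup A G" and B: "subgroup B G" and g: "g \<in> carrier G"
  shows "ratio G (conj_set G g A) (conj_set G g B) = ratio G A B"
proof -
  have Ac: "A \<subseteq> carrier G" using A subgroup.subset by blast
  have Bc: "B \<subseteq> carrier G" using B subgroup.subset by blast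
  have AB: "subgroup (A \<inter> B) G" using subgroups_Inter_pair A B by blast
  show ?thesis unfolding ratio_def conj_Int[OF Ac Bc g, symmetric]
    using idx_conj[OF A AB g] idx_conj[OF B AB g] by simp
qed

lemma (in group) conj_cos:
  assumes tg: "topological_group G T" and U: "compact_open_subgroup G T U" and g: "g \<in> carrier G"
  shows "compact_open_subgroup G T (conj_set G g U)"
proof -
  have Us: "subgroup U G" "compactin T U" "openin T U" using U unfolding compact_open_subgroup_def by auto
  have Uc: "U \<subseteq> carrier G" using Us subgroup.subset by blast
  have ts: "topspace T = carrier G" using tg unfolding topological_group_def by blast
  have c1: "continuous_map T T (\<lambda>x. inv g \<otimes> x \<otimes> g)"
    using continuous_map_compose[OF tg_lmul[OF tg inv_closed[OF g]] tg_rmul[OF tg g]] by (simp add: o_def)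
  have c2: "continuous_map T T (\<lambda>x. g \<otimes> x \<otimes> inv g)"
    using continuous_map_compose[OF tg_lmul[OF tg g] tg_rmul[OF tg inv_closed[OF g]]] by (simp add: o_def)
  have cpt: "compactin T (conj_set G g U)" unfolding conj_set_def using image_compactin[OF Us(2) c1] .
  have eq: "conj_set G g U = {x \<in> topspace T. g \<otimes> x \<otimes> inv g \<in> U}"
  proof
    show "conj_set G g U \<subseteq> {x \<in> topspace T. g \<otimes> x \<otimes> inv g \<in> U}"
    proof
      fix x assume "x \<in> conj_set G g U"
      then obtain u where u: "u \<in> U" "x = inv g \<otimes> u \<otimes> g" unfolding conj_set_def by blast
      have uc: "u \<in> carrier G" using u Uc by auto
      show "x \<in> {x \<in> topspace T. g \<otimes> x \<otimes> inv g \<in> U}"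
        using u uc g cf_back(1)[OF g uc] ts by simp
    qed
    show "{x \<in> topspace T. g \<otimes> x \<otimes> inv g \<in> U} \<subseteq> conj_set G g U"
    proof
      fix x assume x: "x \<in> {x \<in> topspace T. g \<otimes> x \<otimes> inv g \<in> U}"
      then have xc: "x \<in> carrier G" using ts by simp
      have "x = inv g \<otimes> (g \<otimes> x \<otimes> inv g) \<otimes> g" using cf_back(2)[OF g xc] by simp
      then show "x \<in> conj_set G g U" using x unfolding conj_set_def by blast
    qed
  qed
  have op: "openin T (conj_set G g U)" unfolding eq using openin_continuous_map_preimage[OF c2 Us(3)] .
  show ?thesis unfolding compact_open_subgroup_def using conj_subgroup[OF Us(1) g] cpt op by blast
qed



locale cag = group G for G (structure) +
  fixes T :: "'g topology" and V :: "'v set" and E :: "'v \<Rightarrow> 'v \<Rightarrow> bool" and act :: "'v \<Rightarrow> 'g \<Rightarrow> 'v"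
  assumes tg: "topological_group G T" and cg: "cayley_abels_graph G T V E act"
begin

abbreviation S where "S v \<equiv> stabilizer G act v"

lemma act_V: "v \<in> V \<Longrightarrow> g \<in> carrier G \<Longrightarrow> act v g \<in> V"
  using cg unfolding cayley_abels_graph_def by blast
lemma act_one: "v \<in> V \<Longrightarrow> act v \<one> = v"
  using cg unfolding cayley_abels_graph_def by blast
lemma act_mult: "v \<in> V \<Longrightarrow> g \<in> carrier G \<Longrightarrow> h \<in> carrier G \<Longrightarrow> act (act v g) h = act v (g \<otimes> h)"
  using cg unfolding cayley_abels_graph_def by blast
lemma act_trans: "u \<in> V \<Longrightarrow> v \<in> V \<Longrightarrow> \<exists>g\<in>carrier G. act u g = v"
  using cg unfolding cayley_abels_graph_def by blast
lemma V_ne: "V \<noteq> {}"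
  using cg unfolding cayley_abels_graph_def by blast
lemma E_V: "E u v \<Longrightarrow> u \<in> V \<and> v \<in> V"
  using cg unfolding cayley_abels_graph_def by blast
lemma conn: "u \<in> V \<Longrightarrow> v \<in> V \<Longrightarrow> E\<^sup>*\<^sup>* u v"
  using cg unfolding cayley_abels_graph_def by blast

lemma stab_sub:
  assumes v: "v \<in> V" shows "subgroup (S v) G"
proof (rule subgroupI)
  show "S v \<subseteq> carrier G" unfolding stabilizer_def by blast
  show "S v \<noteq> {}" using act_one[OF v] unfolding stabilizer_def by blast
  fix a b assume a: "a \<in> S v"
  then have ac: "a \<in> carrier G" "act v a = v" unfolding stabilizer_def by auto
  have "act v (a \<otimes> inv a) = v" using act_one[OF v] ac by simp
  then have "act v (inv a) = v" using act_mult[OF v ac(1) inv_closed[OF ac(1)]] ac by simp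
  then show "inv a \<in> S v" using ac unfolding stabilizer_def by simp
  assume "b \<in> S v"
  then have bc: "b \<in> carrier G" "act v b = v" unfolding stabilizer_def by auto
  show "a \<otimes> b \<in> S v" using act_mult[OF v ac(1) bc(1)] ac bc unfolding stabilizer_def by simp
qed

lemma stab_cos:
  assumes v: "v \<in> V" shows "compact_open_subgroup G T (S v)"
  using stab_sub[OF v] cg v unfolding compact_open_subgroup_def cayley_abels_graph_def by blast

lemma stab_conj:
  assumes v: "v \<in> V" and g: "g \<in> carrier G"
  shows "S (act v g) = conj_set G g (S v)"
proof
  show "S (act v g) \<subseteq> conj_set G g (S v)"
  proof
    fix x assume "x \<in> S (act v g)"
    then have x: "x \<in> carrier G" "act (act v g) x = act v g" unfolding stabilizer_def by auto
    have vg: "act v g \<in> V" using act_V[OF v g] .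
    have c: "g \<otimes> x \<otimes> inv g \<in> carrier G" using x g by simp
    have "act v (g \<otimes> x \<otimes> inv g) = act (act (act v g) x) (inv g)"
      using act_mult[OF v _ inv_closed[OF g], of "g \<otimes> x"] act_mult[OF v g x(1)] g x(1) by simp
    also have "\<dots> = act v (g \<otimes> inv g)" using x(2) act_mult[OF v g inv_closed[OF g]] by simp
    also have "\<dots> = v" using g act_one[OF v] by simp
    finally have "g \<otimes> x \<otimes> inv g \<in> S v" using c unfolding stabilizer_def by simp
    moreover have "x = inv g \<otimes> (g \<otimes> x \<otimes> inv g) \<otimes> g" using cf_back(2)[OF g x(1)] by simp
    ultimately show "x \<in> conj_set G g (S v)" unfolding conj_set_def by blast
  qed
  show "conj_set G g (S v) \<subseteq> S (act v g)"
  proof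
    fix x assume "x \<in> conj_set G g (S v)"
    then obtain u where u: "u \<in> carrier G" "act v u = v" "x = inv g \<otimes> u \<otimes> g"
      unfolding conj_set_def stabilizer_def by blast
    have xc: "x \<in> carrier G" using u g by simp
    have "act (act v g) x = act v (g \<otimes> (inv g \<otimes> u \<otimes> g))" using act_mult[OF v g xc] u by simp
    also have "g \<otimes> (inv g \<otimes> u \<otimes> g) = u \<otimes> g" using g u by (simp add: m_assoc cancel_aux)
    also have "act v (u \<otimes> g) = act v g" using act_mult[OF v u(1) g] u by simp
    finally show "x \<in> S (act v g)" using xc unfolding stabilizer_def by simp
  qed
qed

lemma orbit_idx:
  assumes a: "a \<in> V" and b: "b \<in> V"
  shows "sg_index G (S a) (S a \<inter> S b) = card (orbit_under act b (S a))"
proof -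
  have K: "subgroup (S a \<inter> S b) G" using subgroups_Inter_pair stab_sub a b by blast
  have rel: "\<forall>x\<in>S a. \<forall>y\<in>S a. ((S a \<inter> S b) #> x = (S a \<inter> S b) #> y) = (act b x = act b y)"
  proof (intro ballI)
    fix x y assume xy: "x \<in> S a" "y \<in> S a"
    have xc: "x \<in> carrier G" "y \<in> carrier G" using xy unfolding stabilizer_def by auto
    have xyS: "x \<otimes> inv y \<in> S a" using xy stab_sub[OF a] subgroup.m_closed subgroup.m_inv_closed by metis
    have "((S a \<inter> S b) #> x = (S a \<inter> S b) #> y) = (x \<otimes> inv y \<in> S a \<inter> S b)"
      using rcos_eq[OF K xc] .
    also have "\<dots> = (act b (x \<otimes> inv y) = b)" using xyS unfolding stabilizer_def by auto
    also have "\<dots> = (act b x = act b y)"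
    proof
      assume h: "act b (x \<otimes> inv y) = b"
      have "act b x = act b ((x \<otimes> inv y) \<otimes> y)" using xc by (simp add: m_assoc)
      also have "\<dots> = act (act b (x \<otimes> inv y)) y" using act_mult[OF b _ xc(2)] xc by simp
      finally show "act b x = act b y" using h by simp
    next
      assume h: "act b x = act b y"
      have "act b (x \<otimes> inv y) = act (act b x) (inv y)" using act_mult[OF b xc(1) inv_closed[OF xc(2)]] by simp
      also have "\<dots> = act b (y \<otimes> inv y)" using h act_mult[OF b xc(2) inv_closed[OF xc(2)]] by simp
      finally show "act b (x \<otimes> inv y) = b" using xc act_one[OF b] by simp
    qed
    finally show "((S a \<inter> S b) #> x = (S a \<inter> S b) #> y) = (act b x = act b y)" .
  qed
  show ?thesis unfolding sg_index_def orbit_under_def using card_image_rel[OF rel] by blast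
qed

lemma ratio_label:
  assumes a: "a \<in> V" and b: "b \<in> V"
  shows "ratio G (S a) (S b) = arc_label G act a b"
  unfolding ratio_def arc_label_def using orbit_idx[OF a b] orbit_idx[OF b a] by (simp add: Int_commute)

definition U0 where "U0 = (SOME U. compact_open_subgroup G T U)"

lemma U0: "compact_open_subgroup G T U0"
proof -
  obtain v where "v \<in> V" using V_ne by blast
  then show ?thesis unfolding U0_def using stab_cos by (metis someI)
qed

lemma modular_U0: "modular_fn G T g = ratio G U0 (conj_set G g U0)"
  unfolding modular_fn_def ratio_def U0_def Let_def by simp

lemma modular_any:
  assumes A: "compact_open_subgroup G T A" and g: "g \<in> carrier G"
  shows "modular_fn G T g = ratio G A (conj_set G g A)"
proof -
  have gr: "group G" by (rule is_group)
  have sA: "subgroup A G" and sU: "subgroup U0 G" using A U0 unfolding compact_open_subgroup_def by auto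
  have cA: "compact_open_subgroup G T (conj_set G g A)" using conj_cos[OF tg A g] .
  have cU: "compact_open_subgroup G T (conj_set G g U0)" using conj_cos[OF tg U0 g] .
  have "ratio G U0 (conj_set G g U0) = ratio G U0 A * ratio G A (conj_set G g U0)"
    using ratio_trans[OF tg gr U0 A cU] by simp
  also have "ratio G A (conj_set G g U0) = ratio G A (conj_set G g A) * ratio G (conj_set G g A) (conj_set G g U0)"
    using ratio_trans[OF tg gr A cA cU] by simp
  also have "ratio G (conj_set G g A) (conj_set G g U0) = ratio G A U0"
    using ratio_conj[OF sA sU g] .
  finally have "ratio G U0 (conj_set G g U0) = ratio G A (conj_set G g A) * (ratio G U0 A * ratio G A U0)"
    by (simp add: ac_simps)
  also have "ratio G U0 A * ratio G A U0 = 1"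
    using ratio_trans[OF tg gr U0 A U0] ratio_self[OF tg gr U0] by simp
  finally show ?thesis using modular_U0 by simp
qed

lemma modular_stab:
  assumes v: "v \<in> V" and g: "g \<in> carrier G"
  shows "modular_fn G T g = ratio G (S v) (S (act v g))"
  using modular_any[OF stab_cos[OF v] g] stab_conj[OF v g] by simp

lemma walk_prod:
  assumes "\<forall>i\<le>s. a i \<in> V"
  shows "ratio G (S (a 0)) (S (a s)) = (\<Prod>i<s. arc_label G act (a i) (a (Suc i)))"
  using assms
proof (induction s)
  case 0
  then show ?case using ratio_self[OF tg is_group stab_cos] by simp
next
  case (Suc s)
  have V: "a 0 \<in> V" "a s \<in> V" "a (Suc s) \<in> V" using Suc.prems by auto
  have "ratio G (S (a 0)) (S (a (Suc s))) = ratio G (S (a 0)) (S (a s)) * ratio G (S (a s)) (S (a (Suc s)))"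
    using ratio_trans[OF tg is_group stab_cos[OF V(1)] stab_cos[OF V(2)] stab_cos[OF V(3)]] by simp
  also have "\<dots> = (\<Prod>i<s. arc_label G act (a i) (a (Suc i))) * arc_label G act (a s) (a (Suc s))"
    using Suc.IH Suc.prems ratio_label[OF V(2,3)] by simp
  finally show ?case by simp
qed

lemma part1:
  assumes g: "g \<in> carrier G" and sa: "s_arc V E s a" and e: "act (a 0) g = a s"
  shows "modular_fn G T g = (\<Prod>i<s. arc_label G act (a i) (a (Suc i)))"
proof -
  have V: "\<forall>i\<le>s. a i \<in> V" using sa unfolding s_arc_def by blast
  then have "a 0 \<in> V" by simp
  then show ?thesis using modular_stab[OF _ g] e walk_prod[OF V] by simp
qed

lemma modular_mult:
  assumes k: "k \<in> carrier G" and h: "h \<in> carrier G"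
  shows "modular_fn G T (k \<otimes> h) = modular_fn G T k * modular_fn G T h"
proof -
  obtain v where v: "v \<in> V" using V_ne by blast
  have vk: "act v k \<in> V" using act_V[OF v k] .
  have vkh: "act v (k \<otimes> h) \<in> V" using act_V[OF v] k h by simp
  have "modular_fn G T (k \<otimes> h) = ratio G (S v) (S (act v (k \<otimes> h)))"
    using modular_stab[OF v] k h by simp
  also have "\<dots> = ratio G (S v) (S (act v k)) * ratio G (S (act v k)) (S (act v (k \<otimes> h)))"
    using ratio_trans[OF tg is_group stab_cos[OF v] stab_cos[OF vk] stab_cos[OF vkh]] by simp
  also have "act v (k \<otimes> h) = act (act v k) h" using act_mult[OF v k h] by simp
  finally show ?thesis using modular_stab[OF v k] modular_stab[OF vk h] by simp
qed

lemma modular_one: "modular_fn G T \<one> = 1"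
proof -
  obtain v where v: "v \<in> V" using V_ne by blast
  show ?thesis using modular_stab[OF v one_closed] act_one[OF v] ratio_self[OF tg is_group stab_cos[OF v]] by simp
qed

lemma label_pos:
  assumes "a \<in> V" "b \<in> V" shows "arc_label G act a b \<noteq> 0"
  using ratio_D[OF tg stab_cos stab_cos, of a b "S a" "S a \<inter> S b \<inter> S a"] assms
    ratio_label[OF assms] stab_sub[OF assms(1)] stab_cos[OF assms(1)]
  unfolding compact_open_subgroup_def by auto

lemma rtranclp_walk:
  assumes "E\<^sup>*\<^sup>* u v" "u \<in> V"
  shows "\<exists>s a. a 0 = u \<and> a s = v \<and> (\<forall>i\<le>s. a i \<in> V) \<and> (\<forall>i<s. E (a i) (a (Suc i)))"
  using assms
proof (induction rule: rtranclp_induct)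
  case base
  then show ?case by (rule_tac x=0 in exI, rule_tac x="\<lambda>_. u" in exI) simp
next
  case (step y z)
  then obtain s a where a: "a 0 = u" "a s = y" "\<forall>i\<le>s. a i \<in> V" "\<forall>i<s. E (a i) (a (Suc i))" by blast
  define b where "b = a(Suc s := z)"
  have "b 0 = u" "b (Suc s) = z" using a unfolding b_def by auto
  moreover have "\<forall>i\<le>Suc s. b i \<in> V" using a E_V[OF step(2)] unfolding b_def by (auto simp: le_Suc_eq)
  moreover have "\<forall>i<Suc s. E (b i) (b (Suc i))" using a step(2) unfolding b_def by (auto simp: less_Suc_eq)
  ultimately show ?case by blast
qed

lemma part2:
  "modular_fn G T ` carrier G = mult_generated {arc_label G act x y | x y. x \<in> V \<and> y \<in> V \<and> E x y}"
  (is "_ = mult_generated ?L")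
proof
  show "modular_fn G T ` carrier G \<subseteq> mult_generated ?L"
  proof
    fix x assume "x \<in> modular_fn G T ` carrier G"
    then obtain g where g: "g \<in> carrier G" "x = modular_fn G T g" by blast
    obtain v where v: "v \<in> V" using V_ne by blast
    obtain s a where a: "a 0 = v" "a s = act v g" "\<forall>i\<le>s. a i \<in> V" "\<forall>i<s. E (a i) (a (Suc i))"
      using rtranclp_walk[OF conn[OF v act_V[OF v g(1)]] v] by blast
    have x: "x = (\<Prod>i<s. arc_label G act (a i) (a (Suc i)))"
      using g modular_stab[OF v g(1)] walk_prod[OF a(3)] a by simp
    have "\<forall>t\<le>s. (\<Prod>i<t. arc_label G act (a i) (a (Suc i))) \<in> mult_generated ?L"
    proof (intro allI impI)
      fix t assume "t \<le> s"
      then show "(\<Prod>i<t. arc_label G act (a i) (a (Suc i))) \<in> mult_generated ?L"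
      proof (induction t)
        case 0
        then show ?case by (simp add: mult_generated.one)
      next
        case (Suc t)
        have "arc_label G act (a t) (a (Suc t)) \<in> ?L"
          using a(3,4) Suc.prems by fastforce
        then show ?case using Suc mult_generated.mul by simp
      qed
    qed
    then show "x \<in> mult_generated ?L" using x by simp
  qed
  show "mult_generated ?L \<subseteq> modular_fn G T ` carrier G"
  proof
    fix x assume "x \<in> mult_generated ?L"
    then show "x \<in> modular_fn G T ` carrier G"
    proof (induction rule: mult_generated.induct)
      case one
      then show ?case using modular_one by force
    next
      case (mul x s)
      obtain h where h: "h \<in> carrier G" "x = modular_fn G T h" using mul by blast
      obtain p q where pq: "s = arc_label G act p q" "p \<in> V" "q \<in> V" using mul by blast
      obtain g0 where g0: "g0 \<in> carrier G" "act p g0 = q" using act_trans[OF pq(2,3)] by blast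
      have "modular_fn G T g0 = s" using modular_stab[OF pq(2) g0(1)] g0 ratio_label[OF pq(2,3)] pq by simp
      then have "x * s = modular_fn G T (h \<otimes> g0)" using modular_mult[OF h(1) g0(1)] h by simp
      then show ?case using h g0 by blast
    next
      case (dvd x s)
      obtain h where h: "h \<in> carrier G" "x = modular_fn G T h" using dvd by blast
      obtain p q where pq: "s = arc_label G act p q" "p \<in> V" "q \<in> V" using dvd by blast
      obtain g0 where g0: "g0 \<in> carrier G" "act p g0 = q" using act_trans[OF pq(2,3)] by blast
      have s: "modular_fn G T g0 = s" using modular_stab[OF pq(2) g0(1)] g0 ratio_label[OF pq(2,3)] pq by simp
      have s0: "s \<noteq> 0" using label_pos[OF pq(2,3)] pq by simp
      have "s * modular_fn G T (inv g0) = 1"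
        using modular_mult[OF g0(1) inv_closed[OF g0(1)]] s modular_one g0 by simp
      then have "modular_fn G T (inv g0) = 1 / s" using s0 by (simp add: field_simps)
      then have "x / s = modular_fn G T (h \<otimes> inv g0)" using modular_mult[OF h(1) inv_closed[OF g0(1)]] h by simp
      then show ?case using h g0 by blast
    qed
  qed
qed

end


theorem theorem4p2:
  fixes G :: "('g, 'b) monoid_scheme" and T :: "'g topology"
    and V :: "'v set" and E :: "'v \<Rightarrow> 'v \<Rightarrow> bool" and act :: "'v \<Rightarrow> 'g \<Rightarrow> 'v"
  assumes "tdlc_group G T"
    and "compactly_generated G T"
    and "cayley_abels_graph G T V E act"
  shows "(\<forall>g s a. g \<in> carrier G \<and> s_arc V E s a \<and> act (a 0) g = a s \<longrightarrow>
            modular_fn G T g = (\<Prod>i<s. arc_label G act (a i) (a (Suc i))))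
       \<and> modular_fn G T ` carrier G
           = mult_generated {arc_label G act x y | x y. x \<in> V \<and> y \<in> V \<and> E x y}"
proof -
  have tg: "topological_group G T" using assms(1) unfolding tdlc_group_def by blast
  have gr: "group G" using tg unfolding topological_group_def by blast
  interpret cag G T V E act using gr tg assms(3) by (simp add: cag_def cag_axioms_def)
  show ?thesis using part1 part2 by blast
qed

end
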